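(* Let $\mathbb{F}$ be a finite field and $n\ge1$. The completely isolated subsemigroups of $M(n,\mathbb{F})$ are exactly $M(n,\mathbb{F})$, $\mathrm{GL}(n,\mathbb{F})$ and $I_{n-1}=M(n,\mathbb{F})\setminus\mathrm{GL}(n,\mathbb{F})$.
   Context: $M(n,\mathbb{F})$ is the semigroup of $n\times n$ matrices over $\mathbb{F}$ under multiplication; $\mathrm{GL}(n,\mathbb{F})$ is its group of units; $I_{n-1}$ is the set of all matrices of rank at most $n-1$. A (nonempty) subsemigroup $T$ of a semigroup $S$ is completely isolated if for all $x,y\in S$, $xy\in T$ implies $x\in T$ or $y\in T$. *)

theory Defs
  imports "HOL-Analysis.Analysis"
begin

text \<open>n x n matrices over a field are 'a^'n^'n (n = CARD('n) \<ge> 1), multiplication is **.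
  A nonempty subsemigroup T of M(n,F) is completely isolated if
  x ** y \<in> T implies x \<in> T or y \<in> T, for all matrices x, y.\<close>

definition completely_isolated :: "('a::semiring_1^'n^'n) set \<Rightarrow> bool" where
  "completely_isolated T \<longleftrightarrow>
     T \<noteq> {} \<and>
     (\<forall>x\<in>T. \<forall>y\<in>T. x ** y \<in> T) \<and>
     (\<forall>x y. x ** y \<in> T \<longrightarrow> x \<in> T \<or> y \<in> T)"

end

theory Submission
  imports Defs
begin

lemma transv_apply:
  fixes w k x :: "'a::field^'n" and i :: 'n
  shows "(((\<chi> r c. (if r = c then 1 else 0) + (k$r - w$r) * (if c = i then inverse (w$i) else 0)) :: 'a^'n^'n) *v x) $ r = x$r + (k$r - w$r) * inverse (w$i) * x$i"
proof -
  have "(((\<chi> r c. (if r = c then 1 else 0) + (k$r - w$r) * (if c = i then inverse (w$i) else 0)) :: 'a^'n^'n) *v x) $ r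
     = (\<Sum>c\<in>UNIV. (if r = c then x$c else 0) + (if c = i then (k$r - w$r) * inverse (w$i) * x$c else 0))"
    unfolding matrix_vector_mult_def vec_lambda_beta by (intro sum.cong refl) (auto simp: algebra_simps)
  also have "\<dots> = x$r + (k$r - w$r) * inverse (w$i) * x$i"
    by (simp only: sum.distrib sum.delta sum.delta' finite UNIV_I if_True)
  finally show ?thesis .
qed

lemma transv:
  fixes w k :: "'a::field^'n" and i :: 'n
  assumes "w$i \<noteq> 0" "k$i \<noteq> 0"
  shows "\<exists>g. invertible g \<and> g *v w = k"
proof -
  define g where "g = ((\<chi> r c. (if r = c then 1 else 0) + (k$r - w$r) * (if c = i then inverse (w$i) else 0)) :: 'a^'n^'n)"
  have ap: "(g *v x) $ r = x$r + (k$r - w$r) * inverse (w$i) * x$i" for x r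
    unfolding g_def by (rule transv_apply)
  have "g *v w = k" using assms by (simp add: vec_eq_iff ap mult.assoc)
  moreover have "invertible g"
    unfolding invertible_left_inverse matrix_left_invertible_ker
  proof (intro allI impI)
    fix x assume x0: "g *v x = 0"
    have "(g *v x) $ i = k$i * inverse (w$i) * x$i" using assms by (simp add: ap algebra_simps)
    then have "x$i = 0" using x0 assms by simp
    then show "x = 0" using x0 by (simp add: vec_eq_iff ap)
  qed
  ultimately show ?thesis by blast
qed


lemma transv2:
  fixes w k :: "'a::field^'n"
  assumes "w \<noteq> 0" "k \<noteq> 0"
  shows "\<exists>g. invertible g \<and> g *v w = k"
proof -
  obtain i where i: "w$i \<noteq> 0" using assms(1) by (metis vec_eq_iff zero_index)
  obtain j where j: "k$j \<noteq> 0" using assms(2) by (metis vec_eq_iff zero_index)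
  define u :: "'a^'n" where "u = (\<chi> r. if r = i \<or> r = j then 1 else 0)"
  have ui: "u$i \<noteq> 0" and uj: "u$j \<noteq> 0" by (auto simp: u_def)
  obtain g1 where g1: "invertible g1" "g1 *v w = u" using transv[OF i ui] by blast
  obtain g2 where g2: "invertible g2" "g2 *v u = k" using transv[OF uj j] by blast
  have "invertible (g2 ** g1)" using g1 g2 invertible_mult by blast
  moreover have "(g2 ** g1) *v w = k" using g1 g2 by (simp flip: matrix_vector_mul_assoc)
  ultimately show ?thesis by blast
qed

lemma inv_iff_det: "invertible (A::'a::field^'n^'n) \<longleftrightarrow> det A \<noteq> 0"
  by (rule invertible_det_nz)

lemma red_step:
  fixes p :: "'a::{field,finite}^'n^'n"
  assumes "p \<noteq> 0" "\<not> invertible p"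
  shows "\<exists>g. invertible g \<and> \<not> invertible (p ** g ** p) \<and>
     card (range ((*v) (p ** g ** p))) < card (range ((*v) p))"
proof -
  obtain x where x: "p *v x \<noteq> 0" using assms(1) by (metis matrix_eq matrix_vector_mult_0)
  obtain k where k: "k \<noteq> 0" "p *v k = 0"
    using assms(2) unfolding invertible_left_inverse matrix_left_invertible_ker by blast
  obtain g where g: "invertible g" "g *v (p *v x) = k" using transv2[OF x k(1)] by blast
  have ni: "\<not> invertible (p ** g ** p)" using assms(2) by (simp add: inv_iff_det det_mul)
  define R where "R = range ((*v) p)"
  define S where "S = (*v) g ` R"
  have ig: "inj ((*v) g)"
    using g(1) unfolding invertible_left_inverse
    by (metis injI matrix_vector_mul_assoc matrix_vector_mul_lid)
  have cS: "card S = card R" unfolding S_def using ig by (simp add: card_image inj_on_subset)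
  have rq: "range ((*v) (p ** g ** p)) = (*v) p ` S"
    unfolding S_def R_def by (auto simp flip: matrix_vector_mul_assoc simp: image_iff)
  have kS: "k \<in> S" unfolding S_def R_def using g(2) by blast
  have zS: "0 \<in> S" unfolding S_def R_def
    by (metis imageI matrix_vector_mult_0_right rangeI)
  have "\<not> inj_on ((*v) p) S" using kS zS k by (metis inj_onD matrix_vector_mult_0_right)
  then have "card ((*v) p ` S) \<noteq> card S" using inj_on_iff_eq_card[of S "(*v) p"] by simp
  moreover have "card ((*v) p ` S) \<le> card S" by (rule card_image_le) simp
  ultimately show ?thesis using g(1) ni rq cS unfolding R_def by auto
qed

lemma red:
  fixes Z :: "('a::{field,finite}^'n^'n) set"
  assumes cl: "\<And>q g. q \<in> Z \<Longrightarrow> invertible g \<Longrightarrow> q ** g ** q \<in> Z"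
  shows "p \<in> Z \<Longrightarrow> \<not> invertible p \<Longrightarrow> 0 \<in> Z"
proof (induction "card (range ((*v) p))" arbitrary: p rule: less_induct)
  case less
  show ?case
  proof (cases "p = 0")
    case True then show ?thesis using less by simp
  next
    case False
    then obtain g where g: "invertible g" "\<not> invertible (p ** g ** p)"
      "card (range ((*v) (p ** g ** p))) < card (range ((*v) p))"
      using red_step less.prems(2) by blast
    show ?thesis using less.hyps[OF g(3)] cl[OF less.prems(1) g(1)] g(2) by blast
  qed
qed

fun mp :: "'a::semiring_1^'n^'n \<Rightarrow> nat \<Rightarrow> 'a^'n^'n" where
  "mp g 0 = mat 1"
| "mp g (Suc k) = g ** mp g k"

lemma mp_add: "mp g (a + b) = mp g a ** mp g b"
  by (induction a) (auto simp: matrix_mul_assoc)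

lemma mp_det: "det (mp (g::'a::field^'n^'n) k) = det g ^ k"
  by (induction k) (auto simp: det_mul)

lemma mp_in: "(\<And>x y. x \<in> Y \<Longrightarrow> y \<in> Y \<Longrightarrow> x ** y \<in> Y) \<Longrightarrow> g \<in> Y \<Longrightarrow> mp g (Suc k) \<in> Y"
  by (induction k) auto

lemma mp_one:
  fixes g :: "'a::{field,finite}^'n^'n"
  assumes "invertible g"
  shows "\<exists>m>0. mp g m = mat 1"
proof -
  have "\<not> inj (mp g)"
  proof
    assume "inj (mp g)"
    then have "finite (UNIV :: nat set)" using finite_imageD[of "mp g" UNIV] by simp
    then show False by simp
  qed
  then obtain a b where ab: "a \<noteq> b" "mp g a = mp g b" unfolding inj_def by blast
  have "\<exists>a b. a < b \<and> mp g a = mp g b"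
    using ab by (metis linorder_neqE_nat)
  then obtain a b where ab: "a < b" "mp g a = mp g b" by blast
  have ia: "invertible (mp g a)" using assms by (simp add: inv_iff_det mp_det)
  then obtain B where B: "mp g a ** B = mat 1" unfolding invertible_right_inverse by blast
  have "mp g b = mp g (b - a) ** mp g a" using ab(1) mp_add[of g "b - a" a] by simp
  then have "mp g a ** B = mp g (b - a) ** (mp g a ** B)" using ab(2) by (simp add: matrix_mul_assoc)
  then have "mp g (b - a) = mat 1" using B by (simp add: matrix_mul_rid)
  then show ?thesis using ab(1) by (intro exI[of _ "b - a"]) simp
qed

lemma part:
  fixes X Y :: "('a::{field,finite}^'n^'n) set"
  assumes XY: "\<And>A. A \<in> X \<longleftrightarrow> A \<notin> Y"
    and cX: "\<And>x y. x \<in> X \<Longrightarrow> y \<in> X \<Longrightarrow> x ** y \<in> X"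
    and cY: "\<And>x y. x \<in> Y \<Longrightarrow> y \<in> Y \<Longrightarrow> x ** y \<in> Y"
    and one: "mat 1 \<in> X" and ne: "Y \<noteq> {}"
  shows "X = {A. invertible A}"
proof -
  have GL: "g \<in> X" if inv: "invertible g" for g
  proof (rule ccontr)
    assume "g \<notin> X"
    then have gY: "g \<in> Y" using XY by blast
    obtain m where m: "m > 0" "mp g m = mat 1" using mp_one[OF inv] by blast
    then obtain k where "m = Suc k" using gr0_implies_Suc by blast
    then have "mat 1 \<in> Y" using mp_in[of Y, OF cY gY, of k] m by simp
    then show False using one XY by blast
  qed
  have Yr: "y ** g \<in> Y" if yg: "y \<in> Y" "invertible g" for y g
  proof (rule ccontr)
    assume "y ** g \<notin> Y"
    then have "y ** g \<in> X" using XY by blast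
    obtain g' where g': "g ** g' = mat 1" "g' ** g = mat 1" using yg(2) unfolding invertible_def by blast
    then have "invertible g'" unfolding invertible_def by blast
    then have "(y ** g) ** g' \<in> X" using cX GL \<open>y ** g \<in> X\<close> by blast
    then have "y \<in> X" using g' by (metis matrix_mul_assoc matrix_mul_rid)
    then show False using yg XY by blast
  qed
  have Yred: "q ** g ** q \<in> Y" if "q \<in> Y" "invertible g" for q g
    using Yr[OF that] cY that(1) by blast
  have Xred: "q ** g ** q \<in> X" if "q \<in> X" "invertible g" for q g
    using cX GL that by blast
  obtain y where y: "y \<in> Y" using ne by blast
  have "\<not> invertible y" using GL y XY by blast
  then have z: "0 \<in> Y" using red[of Y, OF Yred y] by blast
  have "invertible x" if "x \<in> X" for x
  proof (rule ccontr)
    assume "\<not> invertible x"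
    then have "0 \<in> X" using red[of X, OF Xred that] by blast
    then show False using z XY by blast
  qed
  then show ?thesis using GL by blast
qed

lemma inv_mult_iff: "invertible ((A::'a::field^'n^'n) ** (B::'a^'n^'n)) \<longleftrightarrow> invertible A \<and> invertible B"
  unfolding inv_iff_det det_mul by simp

theorem proposition25:
  fixes T :: "(('a::{field,finite})^'n^'n) set"
  shows "completely_isolated T \<longleftrightarrow>
           (T = UNIV \<or> T = {A. invertible A} \<or> T = {A. \<not> invertible A})"
proof
  assume ci: "completely_isolated T"
  have ne: "T \<noteq> {}" and cT: "\<And>x y. x \<in> T \<Longrightarrow> y \<in> T \<Longrightarrow> x ** y \<in> T"
    and iso: "\<And>x y. x ** y \<in> T \<Longrightarrow> x \<in> T \<or> y \<in> T"
    using ci unfolding completely_isolated_def by blast+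
  define T' where "T' = - T"
  have cT': "x ** y \<in> T'" if "x \<in> T'" "y \<in> T'" for x y
    using that iso unfolding T'_def by blast
  show "T = UNIV \<or> T = {A. invertible A} \<or> T = {A. \<not> invertible A}"
  proof (cases "T' = {}")
    case True then show ?thesis unfolding T'_def by blast
  next
    case False
    show ?thesis
    proof (cases "mat 1 \<in> T")
      case True
      have "T = {A. invertible A}"
        by (rule part[of T T']) (use cT cT' True False in \<open>auto simp: T'_def\<close>)
      then show ?thesis by blast
    next
      case one: False
      have "T' = {A. invertible A}"
        by (rule part[of T' T]) (use cT cT' one ne in \<open>auto simp: T'_def\<close>)
      then have "T = {A. \<not> invertible A}" unfolding T'_def by blast
      then show ?thesis by blast
    qed
  qed
next
  assume h: "T = UNIV \<or> T = {A. invertible A} \<or> T = {A. \<not> invertible A}"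
  have i1: "invertible (mat 1 :: 'a^'n^'n)" by (simp add: inv_iff_det)
  have z: "\<not> invertible (0 :: 'a^'n^'n)"
  proof
    assume "invertible (0 :: 'a^'n^'n)"
    then have "\<forall>x::'a^'n. (0::'a^'n^'n) *v x = 0 \<longrightarrow> x = 0"
      unfolding invertible_left_inverse matrix_left_invertible_ker .
    then have "(1::'a^'n) = 0" by simp
    then show False by (simp add: vec_eq_iff)
  qed
  show "completely_isolated T"
    using h i1 z unfolding completely_isolated_def by (auto simp: inv_mult_iff)
qed

end
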